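(* Let $P$ be a finite $(3+1)$-free poset and let $v(P)=\{v(a):a\in P\}$ be its poset of views. Then there is a listing $(S_1,S_2,\dots,S_k)$ of the co-connected components of $v(P)$ such that for every $x\in S_i$ and every $y\in S_{i+1}$ we have $x<y$ in $v(P)$. Moreover, the preimages $v^{-1}(S_i)$, $i=1,\dots,k$, are exactly the tops of tangles, the bottoms of tangles, and the clone sets of $P$.
   Context: A poset $P$ is $(3+1)$-free if there are no $a,b,c,d\in P$ with $a<b<c$ and $d$ incomparable to each of $a,b,c$. For $a\in P$ let $D_a=\{x\in P:x<a\}$, $U_a=\{x\in P:x>a\}$. The view of $a$ is $v(a)=(D_a,P\setminus U_a)$, and the set $v(P)$ of views is partially ordered by $v(a)\le v(b)$ iff $D_a\subseteq D_b$ and $U_a\supseteq U_b$. A co-connected component of a poset is a connected component of its incomparability graph. Write $a\mathrel{\top}b$ if neither of $D_a,D_b$ contains the other, $a\mathrel{\bot}b$ if neither of $U_a,U_b$ contains the other, and $a\approx b$ if $D_a=D_b$ and $U_a=U_b$. A top of a tangle is a subset $A\subseteq P$ with $|A|\ge2$ that is a connected component of the graph on $P$ with edges $\{a,b\}$ for $a\mathrel{\top}b$; a bottom of a tangle is defined in the same way using $\bot$. A top $A$ and bottom $B$ are matched if there are distinct $a_1,a_2\in A$, $b_1,b_2\in B$ with $b_1<a_1$, $b_2<a_2$ and the pairs $\{a_1,a_2\},\{b_1,b_2\},\{b_1,a_2\},\{b_2,a_1\}$ incomparable; in a $(3+1)$-free poset this is a perfect matching between tops and bottoms of tangles, and a tangle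 is a matched pair $(A,B)$. A clone set of $P$ is an equivalence class of $\approx$ restricted to the vertices of $P$ not lying in any top or bottom of a tangle. *)

theory Defs
  imports Main
begin

text \<open>A finite poset is modelled as a finite subset P of a type with a partial order,
  carrying the induced order.\<close>

definition incomp :: "'a::order \<Rightarrow> 'a \<Rightarrow> bool" where
  "incomp x y \<longleftrightarrow> \<not> x \<le> y \<and> \<not> y \<le> x"

definition three_plus_one_free :: "'a::order set \<Rightarrow> bool" where
  "three_plus_one_free P \<longleftrightarrow>
     \<not> (\<exists>a\<in>P. \<exists>b\<in>P. \<exists>c\<in>P. \<exists>d\<in>P. a < b \<and> b < c \<and>
          incomp d a \<and> incomp d b \<and> incomp d c)"

definition downset :: "'a::order set \<Rightarrow> 'a \<Rightarrow> 'a set" where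
  "downset P a = {x \<in> P. x < a}"

definition upset :: "'a::order set \<Rightarrow> 'a \<Rightarrow> 'a set" where
  "upset P a = {x \<in> P. a < x}"

definition view :: "'a::order set \<Rightarrow> 'a \<Rightarrow> 'a set \<times> 'a set" where
  "view P a = (downset P a, P - upset P a)"

text \<open>Order on views: v(a) \<le> v(b) iff D_a \<subseteq> D_b and U_a \<supseteq> U_b,
  i.e. (since the second components are P - U) componentwise inclusion.\<close>
definition view_le :: "'a set \<Rightarrow> 'a set \<times> 'a set \<Rightarrow> 'a set \<times> 'a set \<Rightarrow> bool" where
  "view_le P x y \<longleftrightarrow> fst x \<subseteq> fst y \<and> P - snd x \<supseteq> P - snd y"

definition view_less :: "'a set \<Rightarrow> 'a set \<times> 'a set \<Rightarrow> 'a set \<times> 'a set \<Rightarrow> bool" where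
  "view_less P x y \<longleftrightarrow> view_le P x y \<and> x \<noteq> y"

definition components :: "'b set \<Rightarrow> ('b \<Rightarrow> 'b \<Rightarrow> bool) \<Rightarrow> 'b set set" where
  "components V R =
     {{y \<in> V. (x, y) \<in> {(u, w). u \<in> V \<and> w \<in> V \<and> (R u w \<or> R w u)}\<^sup>*} | x. x \<in> V}"

definition view_cocomponents :: "'a::order set \<Rightarrow> ('a set \<times> 'a set) set set" where
  "view_cocomponents P =
     components (view P ` P) (\<lambda>x y. \<not> view_le P x y \<and> \<not> view_le P y x)"

definition top_rel :: "'a::order set \<Rightarrow> 'a \<Rightarrow> 'a \<Rightarrow> bool" where
  "top_rel P a b \<longleftrightarrow> \<not> downset P a \<subseteq> downset P b \<and> \<not> downset P b \<subseteq> downset P a"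

definition bot_rel :: "'a::order set \<Rightarrow> 'a \<Rightarrow> 'a \<Rightarrow> bool" where
  "bot_rel P a b \<longleftrightarrow> \<not> upset P a \<subseteq> upset P b \<and> \<not> upset P b \<subseteq> upset P a"

definition tangle_tops :: "'a::order set \<Rightarrow> 'a set set" where
  "tangle_tops P = {A \<in> components P (top_rel P). card A \<ge> 2}"

definition tangle_bottoms :: "'a::order set \<Rightarrow> 'a set set" where
  "tangle_bottoms P = {B \<in> components P (bot_rel P). card B \<ge> 2}"

definition clone_sets :: "'a::order set \<Rightarrow> 'a set set" where
  "clone_sets P =
     (let R = P - \<Union>(tangle_tops P \<union> tangle_bottoms P)
      in R // {(a, b). a \<in> R \<and> b \<in> R \<and> downset P a = downset P b \<and> upset P a = upset P b})"

end

theory Submission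
  imports Defs
begin


lemma tpfD:
  assumes "three_plus_one_free P" "a\<in>P" "b\<in>P" "c\<in>P" "d\<in>P" "a < b" "b < c"
    "incomp d a" "incomp d b" "incomp d c"
  shows False
  using assms unfolding three_plus_one_free_def by blast

lemma strict_impossible:
  assumes tpf: "three_plus_one_free P" and P: "a\<in>P" "b\<in>P"
    and Ds: "downset P a \<subset> downset P b" and Us: "upset P a \<subset> upset P b"
  shows False
proof -
  obtain x where x: "x\<in>P" "x<b" "\<not> x<a" using Ds unfolding downset_def by blast
  obtain z where z: "z\<in>P" "b<z" "\<not> a<z" using Us unfolding upset_def by blast
  have nab: "\<not> a < b"
  proof
    assume "a<b" then have "b \<in> upset P a" using P unfolding upset_def by blast
    then have "b \<in> upset P b" using Us by blast
    then show False unfolding upset_def by simp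
  qed
  have nba: "\<not> b < a"
  proof
    assume "b<a" then have "b \<in> downset P a" using P unfolding downset_def by blast
    then have "b \<in> downset P b" using Ds by blast
    then show False unfolding downset_def by simp
  qed
  have neq: "a \<noteq> b" using Ds by blast
  have "incomp a x" unfolding incomp_def
    using x nab by (metis le_less le_less_trans)
  moreover have "incomp a b" unfolding incomp_def using nab nba neq by (simp add: le_less)
  moreover have "incomp a z" unfolding incomp_def
    using z nab nba by (metis le_less less_trans)
  ultimately show False using tpfD[OF tpf x(1) P(2) z(1) P(1) x(2) z(2)] by blast
qed

lemma top_U1:
  assumes tpf: "three_plus_one_free P" and P: "a\<in>P" "b\<in>P" and t: "top_rel P a b"
  shows "upset P a \<subseteq> upset P b"
proof
  fix z assume zU: "z \<in> upset P a"
  obtain x where x: "x\<in>P" "x<a" "\<not> x<b" using t unfolding top_rel_def downset_def by blast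
  obtain y where y: "y\<in>P" "y<b" "\<not> y<a" using t unfolding top_rel_def downset_def by blast
  have z: "z\<in>P" "a<z" using zU unfolding upset_def by auto
  show "z \<in> upset P b"
  proof (rule ccontr)
    assume "z \<notin> upset P b" then have nbz: "\<not> b < z" using z unfolding upset_def by auto
    have nba: "\<not> b < a" using y by (meson less_trans)
    have nab: "\<not> a < b" using x by (meson less_trans)
    have neq: "a \<noteq> b" using x y by blast
    have "incomp b x" unfolding incomp_def using x nba by (metis le_less le_less_trans)
    moreover have "incomp b a" unfolding incomp_def using nab nba neq by (simp add: le_less)
    moreover have "incomp b z" unfolding incomp_def using z nbz nab by (metis le_less less_trans)
    ultimately show False using tpfD[OF tpf x(1) P(1) z(1) P(2) x(2) z(2)] by blast
  qed
qed

lemma top_U: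
  assumes "three_plus_one_free P" "a\<in>P" "b\<in>P" "top_rel P a b"
  shows "upset P a = upset P b"
  using top_U1[OF assms] top_U1[OF assms(1,3,2)] assms(4) unfolding top_rel_def by blast

lemma bot_D1:
  assumes tpf: "three_plus_one_free P" and P: "a\<in>P" "b\<in>P" and t: "bot_rel P a b"
  shows "downset P a \<subseteq> downset P b"
proof
  fix x assume xD: "x \<in> downset P a"
  obtain y where y: "y\<in>P" "a<y" "\<not> b<y" using t unfolding bot_rel_def upset_def by blast
  obtain w where w: "w\<in>P" "b<w" "\<not> a<w" using t unfolding bot_rel_def upset_def by blast
  have x: "x\<in>P" "x<a" using xD unfolding downset_def by auto
  show "x \<in> downset P b"
  proof (rule ccontr)
    assume "x \<notin> downset P b" then have nxb: "\<not> x < b" using x unfolding downset_def by auto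
    have nba: "\<not> b < a" using y by (meson less_trans)
    have nab: "\<not> a < b" using w by (meson less_trans)
    have neq: "a \<noteq> b" using w y by blast
    have "incomp b x" unfolding incomp_def using x nba nxb by (metis le_less le_less_trans)
    moreover have "incomp b a" unfolding incomp_def using nab nba neq by (simp add: le_less)
    moreover have "incomp b y" unfolding incomp_def using y nab by (metis le_less less_trans)
    ultimately show False using tpfD[OF tpf x(1) P(1) y(1) P(2) x(2) y(2)] by blast
  qed
qed

lemma bot_D:
  assumes "three_plus_one_free P" "a\<in>P" "b\<in>P" "bot_rel P a b"
  shows "downset P a = downset P b"
  using bot_D1[OF assms] bot_D1[OF assms(1,3,2)] assms(4) unfolding bot_rel_def by blast

lemma top_bot:
  assumes tpf: "three_plus_one_free P" and P: "a\<in>P" "b\<in>P" "c\<in>P"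
    and t: "top_rel P c a" and bo: "bot_rel P c b"
  shows False
proof -
  have Ue: "upset P c = upset P a" using top_U[OF tpf P(3,1) t] .
  have De: "downset P c = downset P b" using bot_D[OF tpf P(3,2) bo] .
  obtain y where y: "y\<in>P" "y<a" "\<not> y<c" using t unfolding top_rel_def downset_def by blast
  obtain z where z: "z\<in>P" "c<z" "\<not> b<z" using bo unfolding bot_rel_def upset_def by blast
  have az: "a<z" using z Ue unfolding upset_def by blast
  have nyb: "\<not> y < b" using y De unfolding downset_def by blast
  have nba: "\<not> b < a"
  proof
    assume "b<a" then have "upset P a \<subseteq> upset P b" unfolding upset_def using less_trans by blast
    then show False using z Ue unfolding upset_def by blast
  qed
  have neq: "a \<noteq> b" using z az by blast
  have nab: "\<not> a < b" using y nyb by (meson less_trans)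
  have "incomp b y" unfolding incomp_def using y nba nyb by (metis le_less le_less_trans)
  moreover have "incomp b a" unfolding incomp_def using nab nba neq by (simp add: le_less)
  moreover have "incomp b z" unfolding incomp_def using z az nab by (metis le_less less_trans)
  ultimately show False using tpfD[OF tpf y(1) P(1) z(1) P(2) y(2) az] by blast
qed



lemma view_le_iff:
  "view_le P (view P a) (view P b) \<longleftrightarrow> downset P a \<subseteq> downset P b \<and> upset P b \<subseteq> upset P a"
  unfolding view_le_def view_def by (auto simp: upset_def)

lemma view_eq_iff:
  "view P a = view P b \<longleftrightarrow> downset P a = downset P b \<and> upset P a = upset P b"
proof
  assume "view P a = view P b"
  then have "downset P a = downset P b" "P - upset P a = P - upset P b" unfolding view_def by auto
  moreover have "upset P a \<subseteq> P" "upset P b \<subseteq> P" unfolding upset_def by auto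
  ultimately show "downset P a = downset P b \<and> upset P a = upset P b" by blast
qed (simp add: view_def)

lemma incV_iff:
  assumes tpf: "three_plus_one_free P" and P: "a\<in>P" "b\<in>P"
  shows "(\<not> view_le P (view P a) (view P b) \<and> \<not> view_le P (view P b) (view P a))
     \<longleftrightarrow> top_rel P a b \<or> bot_rel P a b"
proof
  assume "top_rel P a b \<or> bot_rel P a b"
  then show "\<not> view_le P (view P a) (view P b) \<and> \<not> view_le P (view P b) (view P a)"
    unfolding view_le_iff top_rel_def bot_rel_def by blast
next
  assume inc: "\<not> view_le P (view P a) (view P b) \<and> \<not> view_le P (view P b) (view P a)"
  show "top_rel P a b \<or> bot_rel P a b"
  proof (rule ccontr)
    assume "\<not> (top_rel P a b \<or> bot_rel P a b)"
    then have Dc: "downset P a \<subseteq> downset P b \<or> downset P b \<subseteq> downset P a"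
      and Uc: "upset P a \<subseteq> upset P b \<or> upset P b \<subseteq> upset P a"
      unfolding top_rel_def bot_rel_def by blast+
    show False
    proof (cases "downset P a \<subseteq> downset P b")
      case True
      then have "\<not> upset P b \<subseteq> upset P a" using inc unfolding view_le_iff by blast
      then have "upset P a \<subset> upset P b" using Uc by blast
      moreover have "downset P a \<subset> downset P b" using True inc \<open>upset P a \<subset> upset P b\<close>
        unfolding view_le_iff by blast
      ultimately show False using strict_impossible[OF tpf P] by blast
    next
      case False
      then have D2: "downset P b \<subseteq> downset P a" using Dc by blast
      then have "\<not> upset P a \<subseteq> upset P b" using inc unfolding view_le_iff by blast
      then have "upset P b \<subset> upset P a" using Uc by blast
      moreover have "downset P b \<subset> downset P a" using D2 False by blast
      ultimately show False using strict_impossible[OF tpf P(2,1)] by blast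
    qed
  qed
qed

definition Egr :: "'b set \<Rightarrow> ('b \<Rightarrow> 'b \<Rightarrow> bool) \<Rightarrow> ('b \<times> 'b) set" where
  "Egr V R = {(u, w). u \<in> V \<and> w \<in> V \<and> (R u w \<or> R w u)}"

lemma components_Egr: "components V R = {{y \<in> V. (x, y) \<in> (Egr V R)\<^sup>*} | x. x \<in> V}"
  unfolding components_def Egr_def by (rule refl)

lemma Egr_sym: "sym (Egr V R)" unfolding Egr_def sym_def by blast

lemma Egr_rtrancl_sym: "(x, y) \<in> (Egr V R)\<^sup>* \<Longrightarrow> (y, x) \<in> (Egr V R)\<^sup>*"
  by (rule symD[OF sym_rtrancl[OF Egr_sym]])

lemma Egr_rtrancl_in: "(x, y) \<in> (Egr V R)\<^sup>* \<Longrightarrow> x \<in> V \<Longrightarrow> y \<in> V"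
  by (induction rule: rtrancl_induct) (auto simp: Egr_def)

lemma Egr_class_eq:
  assumes "(x, y) \<in> (Egr V R)\<^sup>*"
  shows "{z \<in> V. (x, z) \<in> (Egr V R)\<^sup>*} = {z \<in> V. (y, z) \<in> (Egr V R)\<^sup>*}"
proof -
  have yx: "(y, x) \<in> (Egr V R)\<^sup>*" by (rule Egr_rtrancl_sym[OF assms])
  show ?thesis
  proof (intro set_eqI iffI)
    fix z assume "z \<in> {z \<in> V. (x, z) \<in> (Egr V R)\<^sup>*}"
    then show "z \<in> {z \<in> V. (y, z) \<in> (Egr V R)\<^sup>*}" using rtrancl_trans[OF yx] by blast
  next
    fix z assume "z \<in> {z \<in> V. (y, z) \<in> (Egr V R)\<^sup>*}"
    then show "z \<in> {z \<in> V. (x, z) \<in> (Egr V R)\<^sup>*}" using rtrancl_trans[OF assms] by blast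
  qed
qed

lemma lift_gen:
  assumes a: "a\<in>P" "d\<in>P" "R1 a d"
  and stepE: "\<And>u w. u\<in>P \<Longrightarrow> w\<in>P \<Longrightarrow> (view P u, view P w) \<in> Ev \<longleftrightarrow> R1 u w \<or> R2 u w"
  and excl: "\<And>c d e. c\<in>P \<Longrightarrow> d\<in>P \<Longrightarrow> e\<in>P \<Longrightarrow> R1 c d \<Longrightarrow> R2 c e \<Longrightarrow> False"
  and sym1: "\<And>u w. R1 u w \<Longrightarrow> R1 w u"
  and inv1: "\<And>u w c. view P u = view P w \<Longrightarrow> R1 u c \<Longrightarrow> R1 w c"
  and EvV: "Ev \<subseteq> view P ` P \<times> view P ` P"
  shows "{b\<in>P. (view P a, view P b) \<in> Ev\<^sup>*} = {b\<in>P. (a, b) \<in> (Egr P R1)\<^sup>*}"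
proof -
  have has: "\<exists>e\<in>P. R1 c e" if "(a, c) \<in> (Egr P R1)\<^sup>*" for c
    using that
  proof (cases rule: rtranclE)
    case base then show ?thesis using a by blast
  next
    case (step c') then show ?thesis using sym1 unfolding Egr_def by blast
  qed
  have 1: "(view P a, view P b) \<in> Ev\<^sup>*" if "(a, b) \<in> (Egr P R1)\<^sup>*" for b
    using that
  proof (induction rule: rtrancl_induct)
    case base then show ?case by simp
  next
    case (step u w)
    then have "u\<in>P" "w\<in>P" "R1 u w" using sym1 unfolding Egr_def by auto
    then have "(view P u, view P w) \<in> Ev" using stepE by blast
    then show ?case using step.IH by (rule rtrancl_into_rtrancl[rotated])
  qed
  have 2: "\<forall>b\<in>P. y = view P b \<longrightarrow> (a, b) \<in> (Egr P R1)\<^sup>*" if "(view P a, y) \<in> Ev\<^sup>*" for y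
    using that
  proof (induction rule: rtrancl_induct)
    case base
    show ?case
    proof (intro ballI impI)
      fix b assume b: "b\<in>P" "view P a = view P b"
      then have "R1 b d" using inv1 a by blast
      then have "(a, d) \<in> Egr P R1" "(d, b) \<in> Egr P R1" using a b unfolding Egr_def by auto
      then show "(a, b) \<in> (Egr P R1)\<^sup>*" by auto
    qed
  next
    case (step y z)
    obtain c where c: "c\<in>P" "y = view P c" using step.hyps(2) EvV by blast
    have ac: "(a, c) \<in> (Egr P R1)\<^sup>*" using step.IH c by blast
    obtain e where e: "e\<in>P" "R1 c e" using has[OF ac] by blast
    show ?case
    proof (intro ballI impI)
      fix b assume b: "b\<in>P" "z = view P b"
      then have "R1 c b \<or> R2 c b" using stepE step.hyps(2) c b by blast
      then have "R1 c b" using excl[OF c(1) e(1) b(1) e(2)] by blast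
      then have "(c, b) \<in> Egr P R1" using c b unfolding Egr_def by auto
      then show "(a, b) \<in> (Egr P R1)\<^sup>*" using ac by auto
    qed
  qed
  show ?thesis using 1 2 by blast
qed



lemma no_edge_class:
  assumes a: "a\<in>P" and noedge: "\<forall>c\<in>P. \<not> top_rel P a c \<and> \<not> bot_rel P a c"
  and stepE: "\<forall>u\<in>P. \<forall>w\<in>P. (view P u, view P w) \<in> Ev \<longleftrightarrow> top_rel P u w \<or> bot_rel P u w"
  and EvV: "Ev \<subseteq> view P ` P \<times> view P ` P"
  shows "{b\<in>P. (view P a, view P b) \<in> Ev\<^sup>*} = {b\<in>P. view P b = view P a}"
proof (intro set_eqI iffI)
  fix b assume b: "b \<in> {b\<in>P. (view P a, view P b) \<in> Ev\<^sup>*}"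
  then have "(view P a, view P b) \<in> Ev\<^sup>*" by blast
  then have "view P a = view P b"
  proof (cases rule: converse_rtranclE)
    case base then show ?thesis .
  next
    case (step z)
    then obtain c where c: "c\<in>P" "z = view P c" using EvV by blast
    then have "top_rel P a c \<or> bot_rel P a c" using stepE step a by blast
    then show ?thesis using noedge c by blast
  qed
  then show "b \<in> {b\<in>P. view P b = view P a}" using b by auto
qed auto

lemma comp_card:
  assumes fin: "finite P" and a: "a\<in>P" and irr: "\<And>x. \<not> R x x"
  shows "2 \<le> card {b\<in>P. (a, b) \<in> (Egr P R)\<^sup>*} \<longleftrightarrow> (\<exists>c\<in>P. R a c \<or> R c a)"
proof
  assume "\<exists>c\<in>P. R a c \<or> R c a"
  then obtain c where c: "c\<in>P" "R a c \<or> R c a" by blast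
  then have ne: "a \<noteq> c" using irr by blast
  have "(a, c) \<in> Egr P R" using a c unfolding Egr_def by auto
  then have "{a, c} \<subseteq> {b\<in>P. (a, b) \<in> (Egr P R)\<^sup>*}" using a c by auto
  moreover have "finite {b\<in>P. (a, b) \<in> (Egr P R)\<^sup>*}" using fin by auto
  ultimately have "card {a, c} \<le> card {b\<in>P. (a, b) \<in> (Egr P R)\<^sup>*}" by (rule card_mono[rotated])
  then show "2 \<le> card {b\<in>P. (a, b) \<in> (Egr P R)\<^sup>*}" using ne by simp
next
  assume c2: "2 \<le> card {b\<in>P. (a, b) \<in> (Egr P R)\<^sup>*}"
  have "\<exists>b\<in>{b\<in>P. (a, b) \<in> (Egr P R)\<^sup>*}. b \<noteq> a"
  proof (rule ccontr)
    assume "\<not> ?thesis"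
    then have "{b\<in>P. (a, b) \<in> (Egr P R)\<^sup>*} \<subseteq> {a}" by blast
    then have "card {b\<in>P. (a, b) \<in> (Egr P R)\<^sup>*} \<le> card {a}" by (rule card_mono[rotated]) simp
    then show False using c2 by simp
  qed
  then obtain b where b: "(a, b) \<in> (Egr P R)\<^sup>*" "b \<noteq> a" by blast
  from b(1) show "\<exists>c\<in>P. R a c \<or> R c a"
  proof (cases rule: converse_rtranclE)
    case base then show ?thesis using b(2) by simp
  next
    case (step z) then show ?thesis unfolding Egr_def by blast
  qed
qed

lemma in_big_comp:
  assumes fin: "finite P" and irr: "\<And>x. \<not> R x x"
  shows "a \<in> \<Union>{A \<in> components P R. 2 \<le> card A} \<longleftrightarrow> a\<in>P \<and> (\<exists>c\<in>P. R a c \<or> R c a)"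
proof
  assume "a \<in> \<Union>{A \<in> components P R. 2 \<le> card A}"
  then obtain A where A: "A \<in> components P R" "2 \<le> card A" "a \<in> A" by blast
  then obtain x where "x\<in>P" "A = {b\<in>P. (x, b) \<in> (Egr P R)\<^sup>*}"
    unfolding components_Egr by blast
  then have x: "x\<in>P" "a \<in> {b\<in>P. (x, b) \<in> (Egr P R)\<^sup>*}"
    "2 \<le> card {b\<in>P. (x, b) \<in> (Egr P R)\<^sup>*}" using A by auto
  then have "{b\<in>P. (x, b) \<in> (Egr P R)\<^sup>*} = {b\<in>P. (a, b) \<in> (Egr P R)\<^sup>*}"
    using Egr_class_eq[of x a P R] x(2) by simp
  then have "2 \<le> card {b\<in>P. (a, b) \<in> (Egr P R)\<^sup>*}" using x by simp
  then show "a\<in>P \<and> (\<exists>c\<in>P. R a c \<or> R c a)" using comp_card[of P _ R, OF fin _ irr] x by blast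
next
  assume a: "a\<in>P \<and> (\<exists>c\<in>P. R a c \<or> R c a)"
  then have "2 \<le> card {b\<in>P. (a, b) \<in> (Egr P R)\<^sup>*}" using comp_card[of P _ R, OF fin _ irr] by blast
  moreover have "{b\<in>P. (a, b) \<in> (Egr P R)\<^sup>*} \<in> components P R" unfolding components_Egr using a by blast
  moreover have "a \<in> {b\<in>P. (a, b) \<in> (Egr P R)\<^sup>*}" using a by blast
  ultimately show "a \<in> \<Union>{A \<in> components P R. 2 \<le> card A}" by blast
qed

lemma big_comps_eq:
  "{A \<in> components P R. 2 \<le> card A} =
   {{b\<in>P. (a, b) \<in> (Egr P R)\<^sup>*} | a. a\<in>P \<and> 2 \<le> card {b\<in>P. (a, b) \<in> (Egr P R)\<^sup>*}}"
  unfolding components_Egr by blast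

lemma view_le_trans: "view_le P x y \<Longrightarrow> view_le P y z \<Longrightarrow> view_le P x z"
  unfolding view_le_def by blast

lemma propagate1:
  assumes "(x, x') \<in> (Egr V (\<lambda>x y. \<not> view_le P x y \<and> \<not> view_le P y x))\<^sup>*"
    "y \<in> V" "(x, y) \<notin> (Egr V (\<lambda>x y. \<not> view_le P x y \<and> \<not> view_le P y x))\<^sup>*"
    "view_less P x y"
  shows "view_less P x' y"
  using assms(1)
proof (induction rule: rtrancl_induct)
  case base then show ?case using assms(4) .
next
  case (step u w)
  have w: "w \<in> V" "u \<in> V" "\<not> view_le P u w" using step.hyps(2) unfolding Egr_def by auto
  have xw: "(x, w) \<in> (Egr V (\<lambda>x y. \<not> view_le P x y \<and> \<not> view_le P y x))\<^sup>*"
    using step.hyps by auto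
  have "(w, y) \<notin> Egr V (\<lambda>x y. \<not> view_le P x y \<and> \<not> view_le P y x)"
    using xw assms(3) by (meson rtrancl_into_rtrancl)
  then have "view_le P w y \<or> view_le P y w" using w assms(2) unfolding Egr_def by auto
  moreover have "\<not> view_le P y w"
    using step.IH w(3) view_le_trans unfolding view_less_def by blast
  moreover have "w \<noteq> y" using xw assms(3) by blast
  ultimately show ?case unfolding view_less_def by blast
qed

lemma propagate2:
  assumes "(x, x') \<in> (Egr V (\<lambda>x y. \<not> view_le P x y \<and> \<not> view_le P y x))\<^sup>*"
    "y \<in> V" "(x, y) \<notin> (Egr V (\<lambda>x y. \<not> view_le P x y \<and> \<not> view_le P y x))\<^sup>*"
    "view_less P y x"
  shows "view_less P y x'"
  using assms(1)
proof (induction rule: rtrancl_induct)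
  case base then show ?case using assms(4) .
next
  case (step u w)
  have w: "w \<in> V" "u \<in> V" "\<not> view_le P w u" using step.hyps(2) unfolding Egr_def by auto
  have xw: "(x, w) \<in> (Egr V (\<lambda>x y. \<not> view_le P x y \<and> \<not> view_le P y x))\<^sup>*"
    using step.hyps by auto
  have "(w, y) \<notin> Egr V (\<lambda>x y. \<not> view_le P x y \<and> \<not> view_le P y x)"
    using xw assms(3) by (meson rtrancl_into_rtrancl)
  then have "view_le P w y \<or> view_le P y w" using w assms(2) unfolding Egr_def by auto
  moreover have "\<not> view_le P w y"
    using step.IH w(3) view_le_trans unfolding view_less_def by blast
  moreover have "w \<noteq> y" using xw assms(3) by blast
  ultimately show ?case unfolding view_less_def by blast
qed

lemma comps_ordered:
  assumes S: "S \<in> {{y\<in>V. (x, y) \<in> (Egr V (\<lambda>x y. \<not> view_le P x y \<and> \<not> view_le P y x))\<^sup>*} | x. x\<in>V}"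
    and T: "T \<in> {{y\<in>V. (x, y) \<in> (Egr V (\<lambda>x y. \<not> view_le P x y \<and> \<not> view_le P y x))\<^sup>*} | x. x\<in>V}"
    and ne: "S \<noteq> T"
  shows "(\<forall>x\<in>S. \<forall>y\<in>T. view_less P x y) \<or> (\<forall>x\<in>S. \<forall>y\<in>T. view_less P y x)"
proof -
  let ?E = "Egr V (\<lambda>x y. \<not> view_le P x y \<and> \<not> view_le P y x)"
  obtain x0 where x0: "x0\<in>V" "S = {y\<in>V. (x0, y) \<in> ?E\<^sup>*}" using S by blast
  obtain y0 where y0: "y0\<in>V" "T = {y\<in>V. (y0, y) \<in> ?E\<^sup>*}" using T by blast
  have nxy: "(x0, y0) \<notin> ?E\<^sup>*"
  proof
    assume "(x0, y0) \<in> ?E\<^sup>*"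
    then have "{y\<in>V. (x0, y) \<in> ?E\<^sup>*} = {y\<in>V. (y0, y) \<in> ?E\<^sup>*}" by (rule Egr_class_eq)
    then show False using x0 y0 ne by simp
  qed
  have nyx: "(y0, x0) \<notin> ?E\<^sup>*" using nxy Egr_rtrancl_sym[of y0 x0 V] by blast
  have "x0 \<noteq> y0" using nxy by blast
  moreover have "(x0, y0) \<notin> ?E" using nxy by blast
  ultimately have "view_less P x0 y0 \<or> view_less P y0 x0"
    using x0 y0 unfolding Egr_def view_less_def by auto
  then show ?thesis
  proof
    assume l: "view_less P x0 y0"
    have "\<forall>x\<in>S. \<forall>y\<in>T. view_less P x y"
    proof (intro ballI)
      fix x y assume x: "x\<in>S" and y: "y\<in>T"
      have xx: "(x0, x) \<in> ?E\<^sup>*" "x \<in> V" using x x0 by auto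
      have yy: "(y0, y) \<in> ?E\<^sup>*" using y y0 by auto
      have "view_less P x y0" using propagate1[OF xx(1) y0(1) nxy l] .
      moreover have "(y0, x) \<notin> ?E\<^sup>*"
      proof
        assume "(y0, x) \<in> ?E\<^sup>*"
        then have "(x, y0) \<in> ?E\<^sup>*" by (rule Egr_rtrancl_sym)
        then show False using rtrancl_trans[OF xx(1)] nxy by blast
      qed
      ultimately show "view_less P x y" using propagate2[OF yy xx(2)] by blast
    qed
    then show ?thesis by blast
  next
    assume l: "view_less P y0 x0"
    have "\<forall>x\<in>S. \<forall>y\<in>T. view_less P y x"
    proof (intro ballI)
      fix x y assume x: "x\<in>S" and y: "y\<in>T"
      have xx: "(x0, x) \<in> ?E\<^sup>*" "x \<in> V" using x x0 by auto
      have yy: "(y0, y) \<in> ?E\<^sup>*" "y \<in> V" using y y0 by auto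
      have "view_less P y x0" using propagate1[OF yy(1) x0(1) nyx l] .
      moreover have "(x0, y) \<notin> ?E\<^sup>*"
      proof
        assume "(x0, y) \<in> ?E\<^sup>*"
        then have "(y, x0) \<in> ?E\<^sup>*" by (rule Egr_rtrancl_sym)
        then show False using rtrancl_trans[OF yy(1)] nyx by blast
      qed
      ultimately show "view_less P y x" using propagate2[OF xx(1) yy(2)] by blast
    qed
    then show ?thesis by blast
  qed
qed

lemma k_mono:
  assumes fin: "finite P" and x: "x \<in> view P ` P" and y: "y \<in> view P ` P"
    and l: "view_less P x y"
  shows "card (fst x) + card (snd x) < card (fst y) + card (snd y)"
proof -
  have sub: "fst z \<subseteq> P" "snd z \<subseteq> P" if "z \<in> view P ` P" for z
    using that unfolding view_def downset_def by auto
  have f: "fst x \<subseteq> fst y" using l unfolding view_less_def view_le_def by blast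
  have s: "snd x \<subseteq> snd y" using l sub[OF x] sub[OF y] unfolding view_less_def view_le_def by blast
  have fy: "finite (fst y)" "finite (snd y)" using sub[OF y] fin finite_subset by auto
  have ne: "fst x \<noteq> fst y \<or> snd x \<noteq> snd y" using l unfolding view_less_def by (simp add: prod_eq_iff)
  have c1: "card (fst x) \<le> card (fst y)" using card_mono[OF fy(1) f] .
  have c2: "card (snd x) \<le> card (snd y)" using card_mono[OF fy(2) s] .
  show ?thesis
  proof (cases "fst x \<noteq> fst y")
    case True
    then have "card (fst x) < card (fst y)" using psubset_card_mono[OF fy(1)] f by blast
    then show ?thesis using c2 by simp
  next
    case False
    then have "snd x \<subset> snd y" using ne s by blast
    then have "card (snd x) < card (snd y)" using psubset_card_mono[OF fy(2)] by blast
    then show ?thesis using c1 by simp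
  qed
qed

lemma list_exists:
  fixes K :: "'b \<Rightarrow> nat"
  assumes fin: "finite C" and tot: "\<forall>S\<in>C. \<forall>T\<in>C. S \<noteq> T \<longrightarrow> rel S T \<or> rel T S"
    and key: "\<forall>S\<in>C. \<forall>T\<in>C. rel S T \<longrightarrow> K S < K T"
  shows "\<exists>l. distinct l \<and> set l = C \<and> (\<forall>i. Suc i < length l \<longrightarrow> rel (l!i) (l!Suc i))"
proof -
  have inj: "inj_on K C"
  proof (rule inj_onI)
    fix S T assume "S\<in>C" "T\<in>C" "K S = K T"
    then show "S = T" using tot key by (metis less_irrefl)
  qed
  interpret folding_insort_key "(\<le>) :: nat \<Rightarrow> nat \<Rightarrow> bool" "(<)" C K
    by unfold_locales (rule inj)
  obtain l where l: "sorted_wrt (<) (map K l)" "set l = C" "length l = card C"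
    using finite_set_strict_sorted[OF subset_refl fin] by blast
  have d: "distinct l" using l by (simp add: card_distinct)
  have "rel (l!i) (l!Suc i)" if i: "Suc i < length l" for i
  proof -
    have lt: "K (l!i) < K (l!Suc i)"
      using sorted_wrt_nth_less[OF l(1), of i "Suc i"] i by simp
    have mem: "l!i \<in> C" "l!Suc i \<in> C" using i l(2) by auto
    have "l!i \<noteq> l!Suc i" using d i by (simp add: nth_eq_iff_index_eq)
    then show ?thesis using tot key mem lt by (meson less_asym)
  qed
  then show ?thesis using d l(2) by blast
qed



theorem proposition2p13:
  fixes P :: "'a::order set"
  assumes "finite P" and "three_plus_one_free P"
  shows "\<exists>Ss. distinct Ss \<and> set Ss = view_cocomponents P \<and>
           (\<forall>i. Suc i < length Ss \<longrightarrow>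
              (\<forall>x \<in> Ss ! i. \<forall>y \<in> Ss ! Suc i. view_less P x y)) \<and>
           {{a \<in> P. view P a \<in> S} | S. S \<in> set Ss} =
             tangle_tops P \<union> tangle_bottoms P \<union> clone_sets P"
proof -
  note fin = assms(1) and tpf = assms(2)
  define V where "V = view P ` P"
  define Ev where "Ev = Egr V (\<lambda>x y. \<not> view_le P x y \<and> \<not> view_le P y x)"
  define C where "C = {{y\<in>V. (x, y) \<in> Ev\<^sup>*} | x. x\<in>V}"
  have CC: "view_cocomponents P = C"
    unfolding view_cocomponents_def components_Egr C_def Ev_def V_def by (rule refl)
  have EvV: "Ev \<subseteq> view P ` P \<times> view P ` P" unfolding Ev_def Egr_def V_def by auto
  have Ev_mem: "(view P u, view P w) \<in> Ev \<longleftrightarrow> top_rel P u w \<or> bot_rel P u w"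
    if "u\<in>P" "w\<in>P" for u w
  proof -
    have "(view P u, view P w) \<in> Ev \<longleftrightarrow>
      (\<not> view_le P (view P u) (view P w) \<and> \<not> view_le P (view P w) (view P u))"
      unfolding Ev_def Egr_def V_def using that by auto
    then show ?thesis using incV_iff[OF tpf that] by simp
  qed
  define Cm where "Cm a = {b\<in>P. (view P a, view P b) \<in> Ev\<^sup>*}" for a

  define k where "k x = card (fst x) + card (snd x)" for x :: "'a set \<times> 'a set"
  define K where "K S = Min (k ` S)" for S
  define rel where "rel S T \<longleftrightarrow> (\<forall>x\<in>S. \<forall>y\<in>T. view_less P x y)" for S T
  have finV: "finite V" unfolding V_def using fin by simp
  have "C = (\<lambda>x. {y\<in>V. (x, y) \<in> Ev\<^sup>*}) ` V" unfolding C_def by blast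
  then have finC: "finite C" using finV by simp
  have CsubV: "S \<subseteq> V" "S \<noteq> {}" if "S\<in>C" for S
    using that unfolding C_def by auto
  have tot: "\<forall>S\<in>C. \<forall>T\<in>C. S \<noteq> T \<longrightarrow> rel S T \<or> rel T S"
  proof (intro ballI impI)
    fix S T assume ST: "S\<in>C" "T\<in>C" "S \<noteq> T"
    have "(\<forall>x\<in>S. \<forall>y\<in>T. view_less P x y) \<or> (\<forall>x\<in>S. \<forall>y\<in>T. view_less P y x)"
    proof (rule comps_ordered[of S V P T])
      show "S \<in> {{y\<in>V. (x, y) \<in> (Egr V (\<lambda>x y. \<not> view_le P x y \<and> \<not> view_le P y x))\<^sup>*} | x. x\<in>V}"
        using ST(1) unfolding C_def Ev_def .
      show "T \<in> {{y\<in>V. (x, y) \<in> (Egr V (\<lambda>x y. \<not> view_le P x y \<and> \<not> view_le P y x))\<^sup>*} | x. x\<in>V}"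
        using ST(2) unfolding C_def Ev_def .
    qed (rule ST(3))
    then show "rel S T \<or> rel T S" unfolding rel_def by blast
  qed
  have key: "\<forall>S\<in>C. \<forall>T\<in>C. rel S T \<longrightarrow> K S < K T"
  proof (intro ballI impI)
    fix S T assume S: "S\<in>C" and T: "T\<in>C" and r: "rel S T"
    have fT: "finite (k ` T)" using CsubV(1)[OF T] finV finite_subset by blast
    have fS: "finite (k ` S)" using CsubV(1)[OF S] finV finite_subset by blast
    have "K T \<in> k ` T" unfolding K_def
      by (rule Min_in[OF fT]) (use CsubV(2)[OF T] in simp)
    then obtain y where y: "y\<in>T" "K T = k y" by blast
    obtain x where x: "x\<in>S" using CsubV(2)[OF S] by blast
    have "K S \<le> k x" unfolding K_def by (rule Min_le[OF fS]) (use x in simp)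
    moreover have "k x < k y"
    proof -
      have xv: "x \<in> view P ` P" using CsubV(1)[OF S] x unfolding V_def by blast
      have yv: "y \<in> view P ` P" using CsubV(1)[OF T] y(1) unfolding V_def by blast
      have "view_less P x y" using r x y(1) unfolding rel_def by blast
      then show ?thesis unfolding k_def by (rule k_mono[OF fin xv yv])
    qed
    ultimately show "K S < K T" using y by simp
  qed
  obtain Ss where Ss: "distinct Ss" "set Ss = C"
    "\<forall>i. Suc i < length Ss \<longrightarrow> rel (Ss!i) (Ss!Suc i)"
    using list_exists[OF finC tot key] by blast

  have pre: "{{a \<in> P. view P a \<in> S} | S. S \<in> set Ss} = {Cm a | a. a \<in> P}"
  proof (intro set_eqI iffI)
    fix X assume "X \<in> {{a \<in> P. view P a \<in> S} | S. S \<in> set Ss}"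
    then obtain S where S: "S \<in> C" "X = {a \<in> P. view P a \<in> S}" using Ss(2) by blast
    then obtain x where x: "x \<in> V" "S = {y\<in>V. (x, y) \<in> Ev\<^sup>*}" unfolding C_def by blast
    then obtain a0 where a0: "a0 \<in> P" "x = view P a0" unfolding V_def by blast
    have "X = Cm a0" unfolding Cm_def S(2) x(2) a0(2) V_def by auto
    then show "X \<in> {Cm a | a. a \<in> P}" using a0 by blast
  next
    fix X assume "X \<in> {Cm a | a. a \<in> P}"
    then obtain a0 where a0: "a0\<in>P" "X = Cm a0" by blast
    have "X = {a \<in> P. view P a \<in> {y\<in>V. (view P a0, y) \<in> Ev\<^sup>*}}"
      unfolding a0 Cm_def V_def by auto
    moreover have "view P a0 \<in> V" unfolding V_def using a0 by blast
    then have "{y\<in>V. (view P a0, y) \<in> Ev\<^sup>*} \<in> C" unfolding C_def by blast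
    then have "{y\<in>V. (view P a0, y) \<in> Ev\<^sup>*} \<in> set Ss" using Ss(2) by simp
    ultimately show "X \<in> {{a \<in> P. view P a \<in> S} | S. S \<in> set Ss}" by blast
  qed

  have tsym: "\<And>u w. top_rel P u w \<Longrightarrow> top_rel P w u" unfolding top_rel_def by blast
  have bsym: "\<And>u w. bot_rel P u w \<Longrightarrow> bot_rel P w u" unfolding bot_rel_def by blast
  have tirr: "\<And>x. \<not> top_rel P x x" unfolding top_rel_def by blast
  have birr: "\<And>x. \<not> bot_rel P x x" unfolding bot_rel_def by blast
  define TC where "TC a = {b\<in>P. (a, b) \<in> (Egr P (top_rel P))\<^sup>*}" for a
  define BC where "BC a = {b\<in>P. (a, b) \<in> (Egr P (bot_rel P))\<^sup>*}" for a
  have Cm_top: "Cm a = TC a" if "a\<in>P" "c\<in>P" "top_rel P a c" for a c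
    unfolding Cm_def TC_def
  proof (rule lift_gen[of a P c "top_rel P" Ev "bot_rel P"])
    show "\<And>u w. u\<in>P \<Longrightarrow> w\<in>P \<Longrightarrow> (view P u, view P w) \<in> Ev \<longleftrightarrow> top_rel P u w \<or> bot_rel P u w"
      by (rule Ev_mem)
    show "\<And>c d e. c\<in>P \<Longrightarrow> d\<in>P \<Longrightarrow> e\<in>P \<Longrightarrow> top_rel P c d \<Longrightarrow> bot_rel P c e \<Longrightarrow> False"
      using top_bot[OF tpf] by blast
    show "\<And>u w c. view P u = view P w \<Longrightarrow> top_rel P u c \<Longrightarrow> top_rel P w c"
      unfolding view_eq_iff top_rel_def by simp
  qed (use that tsym EvV in auto)
  have Cm_bot: "Cm a = BC a" if "a\<in>P" "c\<in>P" "bot_rel P a c" for a c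
    unfolding Cm_def BC_def
  proof (rule lift_gen[of a P c "bot_rel P" Ev "top_rel P"])
    show "\<And>u w. u\<in>P \<Longrightarrow> w\<in>P \<Longrightarrow> (view P u, view P w) \<in> Ev \<longleftrightarrow> bot_rel P u w \<or> top_rel P u w"
      using Ev_mem by blast
    show "\<And>c d e. c\<in>P \<Longrightarrow> d\<in>P \<Longrightarrow> e\<in>P \<Longrightarrow> bot_rel P c d \<Longrightarrow> top_rel P c e \<Longrightarrow> False"
      using top_bot[OF tpf] by blast
    show "\<And>u w c. view P u = view P w \<Longrightarrow> bot_rel P u c \<Longrightarrow> bot_rel P w c"
      unfolding view_eq_iff bot_rel_def by simp
  qed (use that bsym EvV in auto)
  have tops: "tangle_tops P = {TC a | a. a\<in>P \<and> 2 \<le> card (TC a)}"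
    unfolding tangle_tops_def big_comps_eq TC_def by (rule refl)
  have bots: "tangle_bottoms P = {BC a | a. a\<in>P \<and> 2 \<le> card (BC a)}"
    unfolding tangle_bottoms_def big_comps_eq BC_def by (rule refl)
  have cardT: "2 \<le> card (TC a) \<longleftrightarrow> (\<exists>c\<in>P. top_rel P a c)" if "a\<in>P" for a
  proof -
    have "(\<exists>c\<in>P. top_rel P a c \<or> top_rel P c a) \<longleftrightarrow> (\<exists>c\<in>P. top_rel P a c)" using tsym by blast
    then show ?thesis unfolding TC_def using comp_card[of P a "top_rel P", OF fin that tirr] by simp
  qed
  have cardB: "2 \<le> card (BC a) \<longleftrightarrow> (\<exists>c\<in>P. bot_rel P a c)" if "a\<in>P" for a
  proof -
    have "(\<exists>c\<in>P. bot_rel P a c \<or> bot_rel P c a) \<longleftrightarrow> (\<exists>c\<in>P. bot_rel P a c)" using bsym by blast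
    then show ?thesis unfolding BC_def using comp_card[of P a "bot_rel P", OF fin that birr] by simp
  qed
  define R0 where "R0 = P - \<Union>(tangle_tops P \<union> tangle_bottoms P)"
  have inR: "a \<in> R0 \<longleftrightarrow> a\<in>P \<and> (\<forall>c\<in>P. \<not> top_rel P a c \<and> \<not> bot_rel P a c)" for a
  proof -
    have "a \<in> \<Union>(tangle_tops P) \<longleftrightarrow> a\<in>P \<and> (\<exists>c\<in>P. top_rel P a c)"
    proof -
      have "(\<exists>c\<in>P. top_rel P a c \<or> top_rel P c a) \<longleftrightarrow> (\<exists>c\<in>P. top_rel P a c)" using tsym by blast
      then show ?thesis unfolding tangle_tops_def using in_big_comp[of P "top_rel P" a, OF fin tirr] by simp
    qed
    moreover have "a \<in> \<Union>(tangle_bottoms P) \<longleftrightarrow> a\<in>P \<and> (\<exists>c\<in>P. bot_rel P a c)"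
    proof -
      have "(\<exists>c\<in>P. bot_rel P a c \<or> bot_rel P c a) \<longleftrightarrow> (\<exists>c\<in>P. bot_rel P a c)" using bsym by blast
      then show ?thesis unfolding tangle_bottoms_def using in_big_comp[of P "bot_rel P" a, OF fin birr] by simp
    qed
    ultimately show ?thesis unfolding R0_def by blast
  qed
  define relC where "relC = {(a, b). a \<in> R0 \<and> b \<in> R0 \<and> downset P a = downset P b \<and> upset P a = upset P b}"
  have clones: "clone_sets P = R0 // relC" unfolding clone_sets_def R0_def relC_def Let_def by (rule refl)
  have clone_class: "relC `` {a} = Cm a" if a: "a\<in>R0" for a
  proof -
    have aP: "a\<in>P" and ne: "\<forall>c\<in>P. \<not> top_rel P a c \<and> \<not> bot_rel P a c" using a inR by auto
    have "Cm a = {b\<in>P. view P b = view P a}" unfolding Cm_def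
      using no_edge_class[OF aP ne _ EvV] Ev_mem by blast
    also have "\<dots> = relC `` {a}"
    proof (intro set_eqI iffI)
      fix b assume "b \<in> {b\<in>P. view P b = view P a}"
      then have b: "b\<in>P" "downset P a = downset P b" "upset P a = upset P b"
        unfolding view_eq_iff by auto
      then have "\<forall>c\<in>P. \<not> top_rel P b c \<and> \<not> bot_rel P b c" using ne
        unfolding top_rel_def bot_rel_def by simp
      then have "b \<in> R0" using b inR by blast
      then show "b \<in> relC `` {a}" using a b unfolding relC_def by blast
    next
      fix b assume "b \<in> relC `` {a}"
      then show "b \<in> {b\<in>P. view P b = view P a}" unfolding relC_def R0_def view_eq_iff by auto
    qed
    finally show ?thesis by simp
  qed
  have main: "{Cm a | a. a \<in> P} = tangle_tops P \<union> tangle_bottoms P \<union> clone_sets P"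
  proof (intro set_eqI iffI)
    fix X assume "X \<in> {Cm a | a. a \<in> P}"
    then obtain a where a: "a\<in>P" "X = Cm a" by blast
    show "X \<in> tangle_tops P \<union> tangle_bottoms P \<union> clone_sets P"
    proof (cases "\<exists>c\<in>P. top_rel P a c")
      case True
      then obtain c where "c\<in>P" "top_rel P a c" by blast
      then have "X = TC a" using Cm_top a by blast
      then show ?thesis unfolding tops using a True cardT by blast
    next
      case nt: False
      show ?thesis
      proof (cases "\<exists>c\<in>P. bot_rel P a c")
        case True
        then obtain c where "c\<in>P" "bot_rel P a c" by blast
        then have "X = BC a" using Cm_bot a by blast
        then show ?thesis unfolding bots using a True cardB by blast
      next
        case False
        then have aR: "a \<in> R0" using nt a inR by blast
        then have "X = relC `` {a}" using clone_class a by simp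
        then have "X \<in> R0 // relC" using aR by (simp add: quotientI)
        then show ?thesis unfolding clones by blast
      qed
    qed
  next
    fix X assume X: "X \<in> tangle_tops P \<union> tangle_bottoms P \<union> clone_sets P"
    show "X \<in> {Cm a | a. a \<in> P}"
    proof (cases "X \<in> tangle_tops P")
      case True
      then obtain a where a: "a\<in>P" "X = TC a" "2 \<le> card (TC a)" unfolding tops by blast
      then obtain c where "c\<in>P" "top_rel P a c" using cardT by blast
      then have "X = Cm a" using Cm_top a by simp
      then show ?thesis using a by blast
    next
      case nt: False
      show ?thesis
      proof (cases "X \<in> tangle_bottoms P")
        case True
        then obtain a where a: "a\<in>P" "X = BC a" "2 \<le> card (BC a)" unfolding bots by blast
        then obtain c where "c\<in>P" "bot_rel P a c" using cardB by blast
        then have "X = Cm a" using Cm_bot a by simp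
        then show ?thesis using a by blast
      next
        case False
        then have "X \<in> R0 // relC" using X nt unfolding clones by blast
        then obtain a where a: "a \<in> R0" "X = relC `` {a}" by (rule quotientE)
        then have "X = Cm a" using clone_class by simp
        moreover have "a \<in> P" using a inR by blast
        ultimately show ?thesis by blast
      qed
    qed
  qed
  show ?thesis
  proof (intro exI conjI)
    show "distinct Ss" by (rule Ss(1))
    show "set Ss = view_cocomponents P" using Ss(2) CC by simp
    show "\<forall>i. Suc i < length Ss \<longrightarrow> (\<forall>x \<in> Ss ! i. \<forall>y \<in> Ss ! Suc i. view_less P x y)"
      using Ss(3) unfolding rel_def by blast
    show "{{a \<in> P. view P a \<in> S} | S. S \<in> set Ss} = tangle_tops P \<union> tangle_bottoms P \<union> clone_sets P"
      using pre main by simp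
  qed
qed


end
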